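(* None of the following classes of topological spaces is $\omega$-projective: compact locally compact spaces; compact locally compact sober spaces; stably compact spaces.
   Context: A projective system of topological spaces consists of a directed preordered set $(I,\sqsubseteq)$, spaces $X_i$ and continuous maps $p_{ij}\colon X_j\to X_i$ for $i\sqsubseteq j$ with $p_{ii}=\mathrm{id}$ and $p_{ij}\circ p_{jk}=p_{ik}$; its projective limit is its limit in the category of topological spaces. A class is $\omega$-projective if it is closed under projective limits of systems whose index set has a countable cofinal subset. Compactness assumes no separation axiom. A space is locally compact if for every point $x$ and open neighbourhood $U$ of $x$ there is a compact saturated set $Q$ with $x\in\mathrm{int}(Q)\subseteq Q\subseteq U$ (saturated = upward closed in the specialization preorder). Sober: $T_0$ and every irreducible closed set is the closure of a point. Coherent: the intersection of any two compact saturated subsets is compact. Stably compact: sober, locally compact, coherent and compact. *)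

theory Defs
  imports "HOL-Analysis.Analysis"
begin

definition spec_le :: "'a topology \<Rightarrow> 'a \<Rightarrow> 'a \<Rightarrow> bool" where
  "spec_le X x y \<longleftrightarrow> x \<in> X closure_of {y}"

definition saturated_in :: "'a topology \<Rightarrow> 'a set \<Rightarrow> bool" where
  "saturated_in X Q \<longleftrightarrow> Q \<subseteq> topspace X \<and>
     (\<forall>x\<in>Q. \<forall>y\<in>topspace X. spec_le X x y \<longrightarrow> y \<in> Q)"

definition loc_compact :: "'a topology \<Rightarrow> bool" where
  "loc_compact X \<longleftrightarrow> (\<forall>x U. openin X U \<and> x \<in> U \<longrightarrow>
     (\<exists>Q. compactin X Q \<and> saturated_in X Q \<and> x \<in> X interior_of Q \<and> Q \<subseteq> U))"

definition irreducible_closed :: "'a topology \<Rightarrow> 'a set \<Rightarrow> bool" where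
  "irreducible_closed X C \<longleftrightarrow> closedin X C \<and> C \<noteq> {} \<and>
     (\<forall>A B. closedin X A \<and> closedin X B \<and> C \<subseteq> A \<union> B \<longrightarrow> C \<subseteq> A \<or> C \<subseteq> B)"

definition sober :: "'a topology \<Rightarrow> bool" where
  "sober X \<longleftrightarrow> t0_space X \<and>
     (\<forall>C. irreducible_closed X C \<longrightarrow> (\<exists>x\<in>topspace X. C = X closure_of {x}))"

definition coherent :: "'a topology \<Rightarrow> bool" where
  "coherent X \<longleftrightarrow> (\<forall>Q1 Q2. compactin X Q1 \<and> saturated_in X Q1 \<and>
      compactin X Q2 \<and> saturated_in X Q2 \<longrightarrow> compactin X (Q1 \<inter> Q2))"

definition stably_compact :: "'a topology \<Rightarrow> bool" where
  "stably_compact X \<longleftrightarrow> sober X \<and> loc_compact X \<and> coherent X \<and> compact_space X"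

definition projective_system ::
  "'i set \<Rightarrow> ('i \<Rightarrow> 'i \<Rightarrow> bool) \<Rightarrow> ('i \<Rightarrow> 'a topology) \<Rightarrow> ('i \<Rightarrow> 'i \<Rightarrow> 'a \<Rightarrow> 'a) \<Rightarrow> bool" where
  "projective_system I le X p \<longleftrightarrow>
     (\<forall>i\<in>I. le i i) \<and>
     (\<forall>i\<in>I. \<forall>j\<in>I. \<forall>k\<in>I. le i j \<and> le j k \<longrightarrow> le i k) \<and>
     I \<noteq> {} \<and>
     (\<forall>i\<in>I. \<forall>j\<in>I. \<exists>k\<in>I. le i k \<and> le j k) \<and>
     (\<forall>i\<in>I. \<forall>j\<in>I. le i j \<longrightarrow> continuous_map (X j) (X i) (p i j)) \<and>
     (\<forall>i\<in>I. \<forall>x\<in>topspace (X i). p i i x = x) \<and>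
     (\<forall>i\<in>I. \<forall>j\<in>I. \<forall>k\<in>I. le i j \<and> le j k \<longrightarrow>
        (\<forall>x\<in>topspace (X k). p i j (p j k x) = p i k x))"

definition countably_cofinal :: "'i set \<Rightarrow> ('i \<Rightarrow> 'i \<Rightarrow> bool) \<Rightarrow> bool" where
  "countably_cofinal I le \<longleftrightarrow> (\<exists>J\<subseteq>I. countable J \<and> (\<forall>i\<in>I. \<exists>j\<in>J. le i j))"

definition proj_limit ::
  "'i set \<Rightarrow> ('i \<Rightarrow> 'i \<Rightarrow> bool) \<Rightarrow> ('i \<Rightarrow> 'a topology) \<Rightarrow> ('i \<Rightarrow> 'i \<Rightarrow> 'a \<Rightarrow> 'a) \<Rightarrow> ('i \<Rightarrow> 'a) topology" where
  "proj_limit I le X p = subtopology (product_topology X I)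
     {x \<in> topspace (product_topology X I). \<forall>i\<in>I. \<forall>j\<in>I. le i j \<longrightarrow> p i j (x j) = x i}"

text \<open>A class (predicate on spaces, used at the index/point types 'i, 'a) is omega-projective
  if it is closed under projective limits of systems with a countable cofinal subset.\<close>
definition omega_projective ::
  "('a topology \<Rightarrow> bool) \<Rightarrow> (('i \<Rightarrow> 'a) topology \<Rightarrow> bool) \<Rightarrow> 'i itself \<Rightarrow> bool" where
  "omega_projective C C' _ \<longleftrightarrow>
     (\<forall>(I::'i set) le X p. projective_system I le X p \<and> countably_cofinal I le \<and>
        (\<forall>i\<in>I. C (X i)) \<longrightarrow> C' (proj_limit I le X p))"

definition cpt_lc :: "'a topology \<Rightarrow> bool" where
  "cpt_lc X \<longleftrightarrow> compact_space X \<and> loc_compact X"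

definition cpt_lc_sober :: "'a topology \<Rightarrow> bool" where
  "cpt_lc_sober X \<longleftrightarrow> compact_space X \<and> loc_compact X \<and> sober X"

end

theory Submission
  imports Defs
begin

definition gr :: "(nat \<Rightarrow> nat) \<Rightarrow> nat \<Rightarrow> nat set" where
  "gr f n = (\<lambda>i. prod_encode (i, f i)) ` {..<n}"
definition Tn :: "nat \<Rightarrow> nat set set" where
  "Tn n = insert UNIV (range (\<lambda>f. gr f n))"
definition Xt :: "nat \<Rightarrow> nat set topology" where
  "Xt n = topology (\<lambda>U. U \<subseteq> Tn n \<and> (UNIV \<in> U \<longrightarrow> U = Tn n))"

lemma gr_not_univ: "gr f n \<noteq> UNIV"
  unfolding gr_def using infinite_UNIV_nat by (metis finite_imageI finite_lessThan)

lemma istop_Xt: "istopology (\<lambda>U. U \<subseteq> Tn n \<and> (UNIV \<in> U \<longrightarrow> U = Tn n))"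
  unfolding istopology_def by blast

lemma openin_Xt: "openin (Xt n) U \<longleftrightarrow> U \<subseteq> Tn n \<and> (UNIV \<in> U \<longrightarrow> U = Tn n)"
  unfolding Xt_def using istop_Xt by simp

lemma topspace_Xt: "topspace (Xt n) = Tn n"
  unfolding topspace_def openin_Xt by blast

lemma compact_not_univ:
  assumes "compactin (Xt n) Q" "UNIV \<notin> Q" shows "finite Q"
proof -
  have op: "\<forall>U\<in>(\<lambda>q. {q}) ` Q. openin (Xt n) U"
    using assms compactin_subset_topspace[OF assms(1)] by (auto simp: openin_Xt topspace_Xt)
  have "Q \<subseteq> \<Union>((\<lambda>q. {q}) ` Q)" by auto
  then obtain F where "finite F" "F \<subseteq> (\<lambda>q. {q}) ` Q" "Q \<subseteq> \<Union>F"
    using assms(1) op unfolding compactin_def by meson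
  moreover have "\<forall>A\<in>F. finite A" using \<open>F \<subseteq> (\<lambda>q. {q}) ` Q\<close> by auto
  ultimately show ?thesis by (meson finite_Union finite_subset)
qed

lemma compact_Xt: "compactin (Xt n) Q \<longleftrightarrow> Q \<subseteq> Tn n \<and> (UNIV \<in> Q \<or> finite Q)"
proof
  assume "compactin (Xt n) Q" then show "Q \<subseteq> Tn n \<and> (UNIV \<in> Q \<or> finite Q)"
    using compact_not_univ compactin_subset_topspace topspace_Xt by metis
next
  assume a: "Q \<subseteq> Tn n \<and> (UNIV \<in> Q \<or> finite Q)"
  show "compactin (Xt n) Q"
  proof (cases "finite Q")
    case True then show ?thesis using a finite_imp_compactin topspace_Xt by metis
  next
    case False
    then have u: "UNIV \<in> Q" using a by blast
    show ?thesis unfolding compactin_def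
    proof (intro conjI allI impI)
      show "Q \<subseteq> topspace (Xt n)" using a topspace_Xt by metis
    next
      fix \<U> assume h: "(\<forall>U\<in>\<U>. openin (Xt n) U) \<and> Q \<subseteq> \<Union>\<U>"
      then obtain U where "U \<in> \<U>" "UNIV \<in> U" using u by blast
      then have "U = Tn n" using h openin_Xt by blast
      then show "\<exists>F. finite F \<and> F \<subseteq> \<U> \<and> Q \<subseteq> \<Union>F"
        using \<open>U \<in> \<U>\<close> a by (intro exI[of _ "{U}"]) auto
    qed
  qed
qed

lemma closure_Xt: assumes "a \<in> Tn n" shows "Xt n closure_of {a} = {UNIV, a}"
proof -
  have U: "UNIV \<in> Tn n" by (simp add: Tn_def)
  show ?thesis
  proof (rule set_eqI)
    fix x
    show "x \<in> Xt n closure_of {a} \<longleftrightarrow> x \<in> {UNIV, a}"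
    proof
      assume h: "x \<in> Xt n closure_of {a}"
      show "x \<in> {UNIV, a}"
      proof (rule ccontr)
        assume "x \<notin> {UNIV, a}"
        moreover have "x \<in> Tn n" using h in_closure_of topspace_Xt by metis
        ultimately have "openin (Xt n) {x}" by (auto simp: openin_Xt)
        then show False using h \<open>x \<notin> {UNIV, a}\<close> unfolding in_closure_of by auto
      qed
    next
      assume h: "x \<in> {UNIV, a}"
      show "x \<in> Xt n closure_of {a}"
        unfolding in_closure_of topspace_Xt openin_Xt using h U assms by blast
    qed
  qed
qed

lemma spec_Xt: "y \<in> Tn n \<Longrightarrow> spec_le (Xt n) x y \<longleftrightarrow> x = UNIV \<or> x = y"
  unfolding spec_le_def using closure_Xt by auto

lemma sat_Xt: "saturated_in (Xt n) Q \<longleftrightarrow> Q \<subseteq> Tn n \<and> (UNIV \<in> Q \<longrightarrow> Q = Tn n)"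
proof
  assume h: "saturated_in (Xt n) Q"
  then have Q: "Q \<subseteq> Tn n" unfolding saturated_in_def topspace_Xt by blast
  have "y \<in> Q" if "UNIV \<in> Q" "y \<in> Tn n" for y
  proof -
    have "spec_le (Xt n) UNIV y" using spec_Xt[OF that(2)] by simp
    then show ?thesis using h that unfolding saturated_in_def topspace_Xt by blast
  qed
  then show "Q \<subseteq> Tn n \<and> (UNIV \<in> Q \<longrightarrow> Q = Tn n)" using Q by blast
next
  assume h: "Q \<subseteq> Tn n \<and> (UNIV \<in> Q \<longrightarrow> Q = Tn n)"
  show "saturated_in (Xt n) Q" unfolding saturated_in_def topspace_Xt
  proof (intro conjI ballI impI)
    fix x y assume "x \<in> Q" "y \<in> Tn n" "spec_le (Xt n) x y"
    then have "x = UNIV \<or> x = y" using spec_Xt by blast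
    then show "y \<in> Q" using h \<open>x \<in> Q\<close> \<open>y \<in> Tn n\<close> by blast
  qed (use h in blast)
qed

lemma stably_Xt: "stably_compact (Xt n)"
proof -
  have U: "UNIV \<in> Tn n" by (simp add: Tn_def)
  have cs: "compact_space (Xt n)"
    unfolding compact_space_def topspace_Xt compact_Xt using U by blast
  have t0: "t0_space (Xt n)"
    unfolding t0_space_def topspace_Xt
  proof (intro ballI impI)
    fix x y assume "x \<in> Tn n" "y \<in> Tn n" "x \<noteq> y"
    show "\<exists>U. openin (Xt n) U \<and> (x \<notin> U) = (y \<in> U)"
    proof (cases "x = UNIV")
      case True
      then show ?thesis using \<open>y \<in> Tn n\<close> \<open>x \<noteq> y\<close> by (intro exI[of _ "{y}"]) (auto simp: openin_Xt)
    next
      case False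
      then show ?thesis using \<open>x \<in> Tn n\<close> \<open>x \<noteq> y\<close> by (intro exI[of _ "{x}"]) (auto simp: openin_Xt)
    qed
  qed
  have sob: "sober (Xt n)"
    unfolding sober_def
  proof (intro conjI t0 allI impI)
    fix C assume ic: "irreducible_closed (Xt n) C"
    then have cl: "closedin (Xt n) C" and ne: "C \<noteq> {}" unfolding irreducible_closed_def by auto
    have CT: "C \<subseteq> Tn n" using cl closedin_subset topspace_Xt by metis
    have op: "openin (Xt n) (Tn n - C)" using cl topspace_Xt by (metis closedin_def)
    have UC: "UNIV \<in> C"
    proof (rule ccontr)
      assume "UNIV \<notin> C"
      then have "UNIV \<in> Tn n - C" using U by blast
      then have "Tn n - C = Tn n" using op openin_Xt by blast
      then show False using CT ne by blast
    qed
    have clo: "\<And>D. D \<subseteq> Tn n \<Longrightarrow> UNIV \<in> D \<Longrightarrow> closedin (Xt n) D"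
    proof -
      fix D assume "D \<subseteq> Tn n" "UNIV \<in> D"
      then show "closedin (Xt n) D" unfolding closedin_def topspace_Xt openin_Xt by blast
    qed
    show "\<exists>x\<in>topspace (Xt n). C = Xt n closure_of {x}"
    proof (cases "C = {UNIV}")
      case True
      then show ?thesis using U closure_Xt topspace_Xt by (metis insert_absorb2)
    next
      case False
      then obtain a where a: "a \<in> C" "a \<noteq> UNIV" using UC by blast
      have "C = {UNIV, a}"
      proof (rule ccontr)
        assume "C \<noteq> {UNIV, a}"
        then obtain b where b: "b \<in> C" "b \<noteq> UNIV" "b \<noteq> a" using UC a by blast
        have "C \<subseteq> (C - {a}) \<union> (C - {b})" using b by blast
        moreover have "closedin (Xt n) (C - {a})"
          by (rule clo) (use CT UC a b in blast)+
        moreover have "closedin (Xt n) (C - {b})"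
          by (rule clo) (use CT UC a b in blast)+
        ultimately have "C \<subseteq> C - {a} \<or> C \<subseteq> C - {b}"
          using ic unfolding irreducible_closed_def by blast
        then show False using a b by blast
      qed
      then show ?thesis using closure_Xt CT a topspace_Xt by (metis insert_subset)
    qed
  qed
  have lc: "loc_compact (Xt n)"
    unfolding loc_compact_def
  proof (intro allI impI)
    fix x U assume h: "openin (Xt n) U \<and> x \<in> U"
    show "\<exists>Q. compactin (Xt n) Q \<and> saturated_in (Xt n) Q \<and> x \<in> Xt n interior_of Q \<and> Q \<subseteq> U"
    proof (cases "x = UNIV")
      case True
      then have "U = Tn n" using h openin_Xt by blast
      then show ?thesis using h
        by (intro exI[of _ U]) (auto simp: compact_Xt sat_Xt interior_of_openin U)
    next
      case False
      have "x \<in> Tn n" using h openin_Xt by blast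
      then have o: "openin (Xt n) {x}" using False by (auto simp: openin_Xt)
      show ?thesis using h False \<open>x \<in> Tn n\<close>
        by (intro exI[of _ "{x}"]) (auto simp: compact_Xt sat_Xt interior_of_openin[OF o] topspace_Xt)
    qed
  qed
  have coh: "coherent (Xt n)"
    unfolding coherent_def compact_Xt sat_Xt by blast
  show ?thesis unfolding stably_compact_def using sob lc coh cs by blast
qed

definition rs :: "nat \<Rightarrow> nat set \<Rightarrow> nat set" where
  "rs m A = {a\<in>A. fst (prod_decode a) < m}"
definition pp :: "nat \<Rightarrow> nat \<Rightarrow> nat set \<Rightarrow> nat set" where
  "pp i j A = (if A = UNIV then UNIV else rs i A)"

lemma rs_gr: "rs m (gr f n) = gr f (min m n)"
  unfolding rs_def gr_def by auto

lemma gr_eq: "gr f n = gr g n \<longleftrightarrow> (\<forall>i<n. f i = g i)"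
proof
  assume h: "gr f n = gr g n"
  show "\<forall>i<n. f i = g i"
  proof (intro allI impI)
    fix i assume "i < n"
    then have "prod_encode (i, f i) \<in> gr g n" using h unfolding gr_def by blast
    then obtain j where "prod_encode (i, f i) = prod_encode (j, g j)" unfolding gr_def by blast
    then show "f i = g i" using inj_prod_encode by (metis inj_eq prod.inject)
  qed
next
  assume "\<forall>i<n. f i = g i"
  then show "gr f n = gr g n" unfolding gr_def by (auto intro!: image_cong)
qed

lemma pp_gr: "pp i j (gr f n) = gr f (min i n)"
  unfolding pp_def using gr_not_univ rs_gr by simp

lemma Tn_cases: "A \<in> Tn n \<Longrightarrow> A = UNIV \<or> (\<exists>f. A = gr f n)"
  unfolding Tn_def by auto

lemma psys: "projective_system UNIV (\<le>) Xt pp"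
  unfolding projective_system_def
proof (intro conjI ballI impI)
  fix i j :: nat assume "i \<le> j"
  show "continuous_map (Xt j) (Xt i) (pp i j)"
    unfolding continuous_map_def topspace_Xt
  proof (intro conjI allI impI)
    show "pp i j \<in> Tn j \<rightarrow> Tn i"
    proof
      fix A assume "A \<in> Tn j"
      then consider "A = UNIV" | f where "A = gr f j" using Tn_cases by blast
      then show "pp i j A \<in> Tn i"
      proof cases
        case 1 then show ?thesis by (simp add: pp_def Tn_def)
      next
        case 2 then show ?thesis using \<open>i \<le> j\<close> by (simp add: pp_gr Tn_def min_def)
      qed
    qed
  next
    fix U assume "openin (Xt i) U"
    then have U: "U \<subseteq> Tn i" "UNIV \<in> U \<Longrightarrow> U = Tn i" by (auto simp: openin_Xt)
    have img: "\<And>A. A \<in> Tn j \<Longrightarrow> pp i j A \<in> Tn i"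
    proof -
      fix A assume "A \<in> Tn j"
      then consider "A = UNIV" | f where "A = gr f j" using Tn_cases by blast
      then show "pp i j A \<in> Tn i"
      proof cases
        case 1 then show ?thesis by (simp add: pp_def Tn_def)
      next
        case 2 then show ?thesis using \<open>i \<le> j\<close> by (simp add: pp_gr Tn_def min_def)
      qed
    qed
    show "openin (Xt j) {x \<in> Tn j. pp i j x \<in> U}"
      unfolding openin_Xt
    proof (intro conjI impI)
      assume "UNIV \<in> {x \<in> Tn j. pp i j x \<in> U}"
      then have "UNIV \<in> U" by (simp add: pp_def)
      then show "{x \<in> Tn j. pp i j x \<in> U} = Tn j" using U img by auto
    qed auto
  qed
next
  fix i x assume "x \<in> topspace (Xt i)"
  then consider "x = UNIV" | f where "x = gr f i" using Tn_cases topspace_Xt by blast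
  then show "pp i i x = x" by cases (simp add: pp_def, simp add: pp_gr)
next
  fix i j k x assume "i \<le> j \<and> j \<le> k" "x \<in> topspace (Xt k)"
  then consider "x = UNIV" | f where "x = gr f k" using Tn_cases topspace_Xt by blast
  then show "pp i j (pp j k x) = pp i k x"
    using \<open>i \<le> j \<and> j \<le> k\<close> by cases (simp add: pp_def, simp add: pp_gr min_def)
qed (auto, meson nat_le_linear)

lemma ccof: "countably_cofinal (UNIV::nat set) (\<le>)"
  unfolding countably_cofinal_def by auto

abbreviation "LL \<equiv> proj_limit UNIV (\<le>) Xt pp"

lemma topspace_LL: "topspace LL = {x. (\<forall>i. x i \<in> Tn i) \<and> (\<forall>i j. i \<le> j \<longrightarrow> pp i j (x j) = x i)}"
  unfolding proj_limit_def by (auto simp: topspace_Xt PiE_iff)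

lemma thread: "(\<lambda>m. gr f m) \<in> topspace LL"
  unfolding topspace_LL by (auto simp: Tn_def pp_gr min_def)

lemma proj_cont: "continuous_map LL (Xt i) (\<lambda>x. x i)"
  unfolding proj_limit_def
  by (rule continuous_map_from_subtopology) (rule continuous_map_product_projection, simp)

lemma open_pre: "openin (Xt i) V \<Longrightarrow> openin LL {x \<in> topspace LL. x i \<in> V}"
  using openin_continuous_map_preimage[OF proj_cont] by blast

lemma cyl:
  assumes "openin LL W" "z \<in> W"
  shows "\<exists>n. {x \<in> topspace LL. x n = z n} \<subseteq> W"
proof -
  define S where "S = {x \<in> topspace (product_topology Xt (UNIV::nat set)). \<forall>i\<in>UNIV. \<forall>j\<in>UNIV. i \<le> j \<longrightarrow> pp i j (x j) = x i}"
  have L: "LL = subtopology (product_topology Xt UNIV) S" unfolding proj_limit_def S_def by simp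
  obtain V where V: "openin (product_topology Xt UNIV) V" "W = V \<inter> S"
    using assms(1) unfolding L openin_subtopology by blast
  then obtain U where U: "finite {i \<in> UNIV. U i \<noteq> topspace (Xt i)}" "\<forall>i\<in>UNIV. openin (Xt i) (U i)"
      "z \<in> Pi\<^sub>E UNIV U" "Pi\<^sub>E UNIV U \<subseteq> V"
    using assms(2) unfolding openin_product_topology_alt by blast
  obtain n where n: "\<forall>i\<in>{i \<in> UNIV. U i \<noteq> topspace (Xt i)}. i \<le> n"
    using U(1) finite_nat_set_iff_bounded_le by blast
  have zS: "z \<in> topspace LL" using assms openin_subset by blast
  show ?thesis
  proof (intro exI[of _ n] subsetI)
    fix x assume x: "x \<in> {x \<in> topspace LL. x n = z n}"
    have "x i \<in> U i" for i
    proof (cases "i \<le> n")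
      case True
      then have "x i = z i" using x zS unfolding topspace_LL by (metis (mono_tags, lifting) mem_Collect_eq)
      then show ?thesis using U(3) by auto
    next
      case False
      then have "U i = topspace (Xt i)" using n by auto
      then show ?thesis using x unfolding topspace_LL topspace_Xt by auto
    qed
    then have "x \<in> V" using U(4) by auto
    moreover have "x \<in> S" using x L by auto
    ultimately show "x \<in> W" using V by auto
  qed
qed

lemma univ_not_gr: "UNIV \<noteq> gr f n"
  using gr_not_univ by metis

lemma not_lc: "\<not> loc_compact LL"
proof
  assume lc: "loc_compact LL"
  define z where "z = (\<lambda>m. gr (\<lambda>_. 0) m)"
  have zL: "z \<in> topspace LL" unfolding z_def by (rule thread)
  define U0 where "U0 = {x \<in> topspace LL. x 0 \<in> Tn 0 - {UNIV}}"
  have oU0: "openin LL U0" unfolding U0_def by (rule open_pre) (auto simp: openin_Xt)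
  have zU0: "z \<in> U0" unfolding U0_def using zL gr_not_univ by (auto simp: z_def Tn_def)
  obtain Q where Q: "compactin LL Q" "z \<in> LL interior_of Q" "Q \<subseteq> U0"
    using lc[unfolded loc_compact_def, rule_format, OF conjI[OF oU0 zU0]] by (elim exE conjE)
  obtain n where n: "{x \<in> topspace LL. x n = z n} \<subseteq> LL interior_of Q"
    using cyl[OF openin_interior_of Q(2)] by blast
  then have nQ: "{x \<in> topspace LL. x n = z n} \<subseteq> Q" using interior_of_subset[of LL Q] by (rule subset_trans)
  define h where "h k = (\<lambda>i. if i = n then k else (0::nat))" for k
  define Oc where "Oc k = {x \<in> topspace LL. x (Suc n) \<in> {gr (h k) (Suc n)}}" for k
  define Ocp where "Ocp = {x \<in> topspace LL. x n \<in> Tn n - {UNIV, z n}}"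
  have oO: "openin LL (Oc k)" for k
    unfolding Oc_def by (rule open_pre) (auto simp: openin_Xt Tn_def gr_not_univ univ_not_gr)
  have oOcp: "openin LL Ocp"
    unfolding Ocp_def by (rule open_pre) (auto simp: openin_Xt)
  have cover: "Q \<subseteq> \<Union>(insert Ocp (range Oc))"
  proof
    fix x assume xQ: "x \<in> Q"
    then have xL: "x \<in> topspace LL" and x0: "x 0 \<noteq> UNIV" using Q(3) unfolding U0_def by auto
    have xT: "\<And>i. x i \<in> Tn i" and xp: "\<And>i j. i \<le> j \<Longrightarrow> pp i j (x j) = x i"
      using xL unfolding topspace_LL by auto
    have xnu: "x i \<noteq> UNIV" for i
      using xp[of 0 i] x0 by (auto simp: pp_def)
    show "x \<in> \<Union>(insert Ocp (range Oc))"
    proof (cases "x n = z n")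
      case False
      then have "x \<in> Ocp" unfolding Ocp_def using xL xT xnu by auto
      then show ?thesis by blast
    next
      case True
      obtain g where g: "x (Suc n) = gr g (Suc n)" using Tn_cases[OF xT[of "Suc n"]] xnu by blast
      have "gr g n = z n" using xp[of n "Suc n"] g True by (simp add: pp_gr)
      then have "\<forall>i<n. g i = 0" unfolding z_def gr_eq .
      then have "gr g (Suc n) = gr (h (g n)) (Suc n)" unfolding gr_eq h_def by auto
      then have "x \<in> Oc (g n)" unfolding Oc_def using xL g by auto
      then show ?thesis by blast
    qed
  qed
  have opall: "\<forall>U\<in>insert Ocp (range Oc). openin LL U" using oO oOcp by blast
  have H: "\<forall>\<U>. (\<forall>U\<in>\<U>. openin LL U) \<and> Q \<subseteq> \<Union>\<U> \<longrightarrow> (\<exists>F. finite F \<and> F \<subseteq> \<U> \<and> Q \<subseteq> \<Union>F)"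
    using Q(1) unfolding compactin_def by (elim conjE)
  obtain F where F: "finite F" "F \<subseteq> insert Ocp (range Oc)" "Q \<subseteq> \<Union>F"
    using H[rule_format, OF conjI[OF opall cover]] by (elim exE conjE)
  have sub: "F - {Ocp} \<subseteq> Oc ` UNIV" using F(2) by blast
  have fin: "finite (F - {Ocp})" using F(1) by simp
  obtain K where K: "finite K" "F - {Ocp} = Oc ` K"
    using finite_subset_image[OF fin sub] by blast
  obtain k :: nat where k: "k \<notin> K" using ex_new_if_finite[OF infinite_UNIV_nat K(1)] by blast
  define y where "y = (\<lambda>m. gr (h k) m)"
  have yL: "y \<in> topspace LL" unfolding y_def by (rule thread)
  have yn: "y n = z n" unfolding y_def z_def gr_eq h_def by auto
  then have "y \<in> Q" using nQ yL by auto
  then obtain A where A: "A \<in> F" "y \<in> A" using F(3) by blast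
  show False
  proof (cases "A = Ocp")
    case True then show False using A yn unfolding Ocp_def by auto
  next
    case False
    then obtain j where j: "j \<in> K" "A = Oc j" using A K(2) by blast
    then have "gr (h k) (Suc n) = gr (h j) (Suc n)" using A unfolding Oc_def y_def by auto
    then have "h k n = h j n" unfolding gr_eq by auto
    then show False using j k unfolding h_def by auto
  qed
qed

lemma no_omega:
  assumes "omega_projective (P :: nat set topology \<Rightarrow> bool) P' TYPE(nat)"
    and "\<And>i. P (Xt i)" and "\<And>Y. P' Y \<Longrightarrow> loc_compact Y"
  shows False
proof -
  have "P' LL" using assms(1,2) psys ccof unfolding omega_projective_def by blast
  then show False using assms(3) not_lc by blast
qed

theorem corollary3p7:
  shows "\<not> omega_projective (cpt_lc :: nat set topology \<Rightarrow> bool) cpt_lc TYPE(nat)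
       \<and> \<not> omega_projective (cpt_lc_sober :: nat set topology \<Rightarrow> bool) cpt_lc_sober TYPE(nat)
       \<and> \<not> omega_projective (stably_compact :: nat set topology \<Rightarrow> bool) stably_compact TYPE(nat)"
proof (intro conjI notI)
  assume "omega_projective (cpt_lc :: nat set topology \<Rightarrow> bool) cpt_lc TYPE(nat)"
  then show False
    by (rule no_omega) (use stably_Xt in \<open>auto simp: cpt_lc_def stably_compact_def\<close>)
next
  assume "omega_projective (cpt_lc_sober :: nat set topology \<Rightarrow> bool) cpt_lc_sober TYPE(nat)"
  then show False
    by (rule no_omega) (use stably_Xt in \<open>auto simp: cpt_lc_sober_def stably_compact_def\<close>)
next
  assume "omega_projective (stably_compact :: nat set topology \<Rightarrow> bool) stably_compact TYPE(nat)"
  then show False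
    by (rule no_omega) (use stably_Xt in \<open>auto simp: stably_compact_def\<close>)
qed

end
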